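(* Let $(\mathscr{C},\mathbb{E},\mathfrak{s})$ be an extriangulated category such that for every object $C$ the morphism $C\to 0$ is an $\mathbb{E}$-inflation and $0\to C$ is an $\mathbb{E}$-deflation, and let $\Sigma$ and $\mathbf{E}^1(-,-)=\mathscr{C}(-,\Sigma -)$ be as in the context. Let $A$ be an object and $f\colon X\to Y$ a morphism of $\mathscr{C}$. Then $\mathbf{E}^1(A,f)\cong\mathbb{E}(A,f)$ and $\mathbf{E}^1(f,A)\cong\mathbb{E}(f,A)$ as objects of the morphism category $\mathrm{Mor}(Ab)$ (here $\mathbf{E}^1(A,f)\colon\mathscr{C}(A,\Sigma X)\to\mathscr{C}(A,\Sigma Y)$ is $\varepsilon\mapsto\Sigma f\circ\varepsilon$ and $\mathbf{E}^1(f,A)\colon\mathscr{C}(Y,\Sigma A)\to\mathscr{C}(X,\Sigma A)$ is $\varepsilon\mapsto\varepsilon\circ f$).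
   Context: An extriangulated category $(\mathscr{C},\mathbb{E},\mathfrak{s})$ is in the sense of Nakaoka–Palu: $\mathscr{C}$ additive, $\mathbb{E}\colon\mathscr{C}^{\mathrm{op}}\times\mathscr{C}\to Ab$ biadditive, $\mathfrak{s}$ an additive realisation assigning to $\delta\in\mathbb{E}(C,A)$ an equivalence class of sequences $[A\to B\to C]$, satisfying (ET1)–(ET4)$^{\mathrm{op}}$. For $a\colon A\to A'$ and $c\colon C'\to C$ write $a_*\delta=\mathbb{E}(C,a)(\delta)$ and $c^*\delta=\mathbb{E}(c,A)(\delta)$; $\mathbb{E}(c,A)$ denotes $\mathbb{E}(c^{\mathrm{op}},A)$. A morphism $x\colon A\to B$ is an $\mathbb{E}$-inflation if $\mathfrak{s}(\delta)=[A\xrightarrow{x}B\to C]$ for some $\delta\in\mathbb{E}(C,A)$; dually for $\mathbb{E}$-deflations. For each object $Y$, $\Sigma Y$ is a chosen object with $\delta_Y\in\mathbb{E}(\Sigma Y,Y)$ such that $\mathfrak{s}(\delta_Y)=[Y\to 0\to\Sigma Y]$; for $f\colon X\to Y$, $\Sigma f$ is the unique morphism $\Sigma X\to\Sigma Y$ with $f_*\delta_X=(\Sigma f)^*\delta_Y$. $\mathrm{Mor}(Ab)$ is the category whose objects are homomorphisms of abelian groups and whose morphisms are commutative squares. *)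

theory Defs
  imports "HOL-Algebra.Group"
begin

text \<open>
  Objects of type 'o, morphisms of type 'm, extension elements of type 'e.
  cmp g f is the composite g o f.  eact c a d is E(c,a)(d): for c : C' -> C,
  a : A -> A' and d in E(C,A) it lies in E(C',A').
  rlz C A d x y means that the sequence A -x-> B -y-> C belongs to the
  equivalence class s(d), for d in E(C,A).
\<close>

record ('o, 'm, 'e) extri =
  ob    :: "'o set"
  arr   :: "'m set"
  src   :: "'m \<Rightarrow> 'o"
  tgt   :: "'m \<Rightarrow> 'o"
  cmp   :: "'m \<Rightarrow> 'm \<Rightarrow> 'm"
  idm   :: "'o \<Rightarrow> 'm"
  madd  :: "'m \<Rightarrow> 'm \<Rightarrow> 'm"
  mzero :: "'o \<Rightarrow> 'o \<Rightarrow> 'm"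
  ext   :: "'o \<Rightarrow> 'o \<Rightarrow> 'e set"
  eadd  :: "'e \<Rightarrow> 'e \<Rightarrow> 'e"
  ezero :: "'o \<Rightarrow> 'o \<Rightarrow> 'e"
  eact  :: "'m \<Rightarrow> 'm \<Rightarrow> 'e \<Rightarrow> 'e"
  rlz   :: "'o \<Rightarrow> 'o \<Rightarrow> 'e \<Rightarrow> 'm \<Rightarrow> 'm \<Rightarrow> bool"

definition Hom :: "('o,'m,'e) extri \<Rightarrow> 'o \<Rightarrow> 'o \<Rightarrow> 'm set" where
  "Hom K X Y = {f \<in> arr K. src K f = X \<and> tgt K f = Y}"

definition homgrp :: "('o,'m,'e) extri \<Rightarrow> 'o \<Rightarrow> 'o \<Rightarrow> 'm monoid" where
  "homgrp K X Y = \<lparr>carrier = Hom K X Y, mult = madd K, one = mzero K X Y\<rparr>"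

definition extgrp :: "('o,'m,'e) extri \<Rightarrow> 'o \<Rightarrow> 'o \<Rightarrow> 'e monoid" where
  "extgrp K C A = \<lparr>carrier = ext K C A, mult = eadd K, one = ezero K C A\<rparr>"

text \<open>a_* d = E(C,a)(d) for d in E(C,A);  c^* d = E(c,A)(d) for d in E(C,A).\<close>
definition ext_push :: "('o,'m,'e) extri \<Rightarrow> 'o \<Rightarrow> 'm \<Rightarrow> 'e \<Rightarrow> 'e" where
  "ext_push K C a d = eact K (idm K C) a d"

definition ext_pull :: "('o,'m,'e) extri \<Rightarrow> 'o \<Rightarrow> 'm \<Rightarrow> 'e \<Rightarrow> 'e" where
  "ext_pull K A c d = eact K c (idm K A) d"

definition is_category :: "('o,'m,'e) extri \<Rightarrow> bool" where
  "is_category K \<longleftrightarrow>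
     (\<forall>f\<in>arr K. src K f \<in> ob K \<and> tgt K f \<in> ob K) \<and>
     (\<forall>X\<in>ob K. idm K X \<in> Hom K X X) \<and>
     (\<forall>X Y Z f g. f \<in> Hom K X Y \<longrightarrow> g \<in> Hom K Y Z \<longrightarrow> cmp K g f \<in> Hom K X Z) \<and>
     (\<forall>W X Y Z f g h. f \<in> Hom K W X \<longrightarrow> g \<in> Hom K X Y \<longrightarrow> h \<in> Hom K Y Z \<longrightarrow>
        cmp K h (cmp K g f) = cmp K (cmp K h g) f) \<and>
     (\<forall>X Y f. f \<in> Hom K X Y \<longrightarrow> cmp K f (idm K X) = f \<and> cmp K (idm K Y) f = f)"

definition is_preadditive :: "('o,'m,'e) extri \<Rightarrow> bool" where
  "is_preadditive K \<longleftrightarrow> is_category K \<and>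
     (\<forall>X\<in>ob K. \<forall>Y\<in>ob K. comm_group (homgrp K X Y)) \<and>
     (\<forall>X Y Z f f' g. f \<in> Hom K X Y \<longrightarrow> f' \<in> Hom K X Y \<longrightarrow> g \<in> Hom K Y Z \<longrightarrow>
        cmp K g (madd K f f') = madd K (cmp K g f) (cmp K g f')) \<and>
     (\<forall>X Y Z f g g'. f \<in> Hom K X Y \<longrightarrow> g \<in> Hom K Y Z \<longrightarrow> g' \<in> Hom K Y Z \<longrightarrow>
        cmp K (madd K g g') f = madd K (cmp K g f) (cmp K g' f))"

definition zero_obj :: "('o,'m,'e) extri \<Rightarrow> 'o \<Rightarrow> bool" where
  "zero_obj K Z \<longleftrightarrow> Z \<in> ob K \<and> idm K Z = mzero K Z Z"

definition is_biprod :: "('o,'m,'e) extri \<Rightarrow> 'o \<Rightarrow> 'o \<Rightarrow> 'o \<Rightarrow> 'm \<Rightarrow> 'm \<Rightarrow> 'm \<Rightarrow> 'm \<Rightarrow> bool" where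
  "is_biprod K X Y S i1 i2 p1 p2 \<longleftrightarrow> S \<in> ob K \<and>
     i1 \<in> Hom K X S \<and> i2 \<in> Hom K Y S \<and> p1 \<in> Hom K S X \<and> p2 \<in> Hom K S Y \<and>
     cmp K p1 i1 = idm K X \<and> cmp K p2 i2 = idm K Y \<and>
     cmp K p1 i2 = mzero K Y X \<and> cmp K p2 i1 = mzero K X Y \<and>
     madd K (cmp K i1 p1) (cmp K i2 p2) = idm K S"

definition is_additive :: "('o,'m,'e) extri \<Rightarrow> bool" where
  "is_additive K \<longleftrightarrow> is_preadditive K \<and> (\<exists>Z. zero_obj K Z) \<and>
     (\<forall>X\<in>ob K. \<forall>Y\<in>ob K. \<exists>S i1 i2 p1 p2. is_biprod K X Y S i1 i2 p1 p2)"

definition ET1 :: "('o,'m,'e) extri \<Rightarrow> bool" where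
  "ET1 K \<longleftrightarrow>
     (\<forall>C\<in>ob K. \<forall>A\<in>ob K. comm_group (extgrp K C A)) \<and>
     (\<forall>C C' A A' c a d. c \<in> Hom K C' C \<longrightarrow> a \<in> Hom K A A' \<longrightarrow> d \<in> ext K C A \<longrightarrow>
        eact K c a d \<in> ext K C' A') \<and>
     (\<forall>C C' A A' c a d d'. c \<in> Hom K C' C \<longrightarrow> a \<in> Hom K A A' \<longrightarrow> d \<in> ext K C A \<longrightarrow>
        d' \<in> ext K C A \<longrightarrow> eact K c a (eadd K d d') = eadd K (eact K c a d) (eact K c a d')) \<and>
     (\<forall>C A d. C \<in> ob K \<longrightarrow> A \<in> ob K \<longrightarrow> d \<in> ext K C A \<longrightarrow> eact K (idm K C) (idm K A) d = d) \<and>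
     (\<forall>C C' C'' A A' A'' c c' a a' d. c \<in> Hom K C' C \<longrightarrow> c' \<in> Hom K C'' C' \<longrightarrow>
        a \<in> Hom K A A' \<longrightarrow> a' \<in> Hom K A' A'' \<longrightarrow> d \<in> ext K C A \<longrightarrow>
        eact K (cmp K c c') (cmp K a' a) d = eact K c' a' (eact K c a d)) \<and>
     (\<forall>C C' A A' c1 c2 a d. c1 \<in> Hom K C' C \<longrightarrow> c2 \<in> Hom K C' C \<longrightarrow> a \<in> Hom K A A' \<longrightarrow>
        d \<in> ext K C A \<longrightarrow> eact K (madd K c1 c2) a d = eadd K (eact K c1 a d) (eact K c2 a d)) \<and>
     (\<forall>C C' A A' c a1 a2 d. c \<in> Hom K C' C \<longrightarrow> a1 \<in> Hom K A A' \<longrightarrow> a2 \<in> Hom K A A' \<longrightarrow>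
        d \<in> ext K C A \<longrightarrow> eact K c (madd K a1 a2) d = eadd K (eact K c a1 d) (eact K c a2 d))"

definition is_iso :: "('o,'m,'e) extri \<Rightarrow> 'o \<Rightarrow> 'o \<Rightarrow> 'm \<Rightarrow> bool" where
  "is_iso K X Y b \<longleftrightarrow> b \<in> Hom K X Y \<and>
     (\<exists>b'\<in>Hom K Y X. cmp K b' b = idm K X \<and> cmp K b b' = idm K Y)"

definition seq_equiv :: "('o,'m,'e) extri \<Rightarrow> 'o \<Rightarrow> 'm \<Rightarrow> 'm \<Rightarrow> 'o \<Rightarrow> 'm \<Rightarrow> 'm \<Rightarrow> bool" where
  "seq_equiv K B x y B' x' y' \<longleftrightarrow>
     (\<exists>b. is_iso K B B' b \<and> cmp K b x = x' \<and> cmp K y' b = y)"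

definition ET2 :: "('o,'m,'e) extri \<Rightarrow> bool" where
  "ET2 K \<longleftrightarrow>
     (\<forall>C A d x y. rlz K C A d x y \<longrightarrow> C \<in> ob K \<and> A \<in> ob K \<and> d \<in> ext K C A \<and>
        (\<exists>B\<in>ob K. x \<in> Hom K A B \<and> y \<in> Hom K B C)) \<and>
     (\<forall>C\<in>ob K. \<forall>A\<in>ob K. \<forall>d\<in>ext K C A. \<exists>x y. rlz K C A d x y) \<and>
     (\<forall>C A B B' d x y x' y'. rlz K C A d x y \<longrightarrow> x \<in> Hom K A B \<longrightarrow> y \<in> Hom K B C \<longrightarrow>
        x' \<in> Hom K A B' \<longrightarrow> y' \<in> Hom K B' C \<longrightarrow>
        (rlz K C A d x' y' \<longleftrightarrow> seq_equiv K B x y B' x' y')) \<and>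
     (\<forall>C A B C' A' B' d d' x y x' y' a c.
        rlz K C A d x y \<longrightarrow> rlz K C' A' d' x' y' \<longrightarrow>
        x \<in> Hom K A B \<longrightarrow> y \<in> Hom K B C \<longrightarrow> x' \<in> Hom K A' B' \<longrightarrow> y' \<in> Hom K B' C' \<longrightarrow>
        a \<in> Hom K A A' \<longrightarrow> c \<in> Hom K C C' \<longrightarrow>
        ext_push K C a d = ext_pull K A' c d' \<longrightarrow>
        (\<exists>b\<in>Hom K B B'. cmp K b x = cmp K x' a \<and> cmp K y' b = cmp K c y)) \<and>
     (\<forall>C A S i1 i2 p1 p2. C \<in> ob K \<longrightarrow> A \<in> ob K \<longrightarrow> is_biprod K A C S i1 i2 p1 p2 \<longrightarrow>
        rlz K C A (ezero K C A) i1 p2) \<and>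
     (\<forall>C A B C' A' B' d d' x y x' y' SA iA1 iA2 pA1 pA2 SB iB1 iB2 pB1 pB2 SC iC1 iC2 pC1 pC2.
        rlz K C A d x y \<longrightarrow> rlz K C' A' d' x' y' \<longrightarrow>
        x \<in> Hom K A B \<longrightarrow> y \<in> Hom K B C \<longrightarrow> x' \<in> Hom K A' B' \<longrightarrow> y' \<in> Hom K B' C' \<longrightarrow>
        is_biprod K A A' SA iA1 iA2 pA1 pA2 \<longrightarrow>
        is_biprod K B B' SB iB1 iB2 pB1 pB2 \<longrightarrow>
        is_biprod K C C' SC iC1 iC2 pC1 pC2 \<longrightarrow>
        rlz K SC SA (eadd K (eact K pC1 iA1 d) (eact K pC2 iA2 d'))
          (madd K (cmp K iB1 (cmp K x pA1)) (cmp K iB2 (cmp K x' pA2)))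
          (madd K (cmp K iC1 (cmp K y pB1)) (cmp K iC2 (cmp K y' pB2))))"

definition ET3 :: "('o,'m,'e) extri \<Rightarrow> bool" where
  "ET3 K \<longleftrightarrow>
     (\<forall>C A B C' A' B' d d' x y x' y' a b.
        rlz K C A d x y \<longrightarrow> rlz K C' A' d' x' y' \<longrightarrow>
        x \<in> Hom K A B \<longrightarrow> y \<in> Hom K B C \<longrightarrow> x' \<in> Hom K A' B' \<longrightarrow> y' \<in> Hom K B' C' \<longrightarrow>
        a \<in> Hom K A A' \<longrightarrow> b \<in> Hom K B B' \<longrightarrow> cmp K b x = cmp K x' a \<longrightarrow>
        (\<exists>c\<in>Hom K C C'. cmp K c y = cmp K y' b \<and> ext_push K C a d = ext_pull K A' c d'))"

definition ET3op :: "('o,'m,'e) extri \<Rightarrow> bool" where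
  "ET3op K \<longleftrightarrow>
     (\<forall>C A B C' A' B' d d' x y x' y' b c.
        rlz K C A d x y \<longrightarrow> rlz K C' A' d' x' y' \<longrightarrow>
        x \<in> Hom K A B \<longrightarrow> y \<in> Hom K B C \<longrightarrow> x' \<in> Hom K A' B' \<longrightarrow> y' \<in> Hom K B' C' \<longrightarrow>
        b \<in> Hom K B B' \<longrightarrow> c \<in> Hom K C C' \<longrightarrow> cmp K y' b = cmp K c y \<longrightarrow>
        (\<exists>a\<in>Hom K A A'. cmp K x' a = cmp K b x \<and> ext_push K C a d = ext_pull K A' c d'))"

definition ET4 :: "('o,'m,'e) extri \<Rightarrow> bool" where
  "ET4 K \<longleftrightarrow>
     (\<forall>A B C D F d d' f f' g g'.
        rlz K D A d f f' \<longrightarrow> rlz K F B d' g g' \<longrightarrow>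
        f \<in> Hom K A B \<longrightarrow> f' \<in> Hom K B D \<longrightarrow> g \<in> Hom K B C \<longrightarrow> g' \<in> Hom K C F \<longrightarrow>
        (\<exists>E\<in>ob K. \<exists>h'\<in>Hom K C E. \<exists>dm\<in>Hom K D E. \<exists>e\<in>Hom K E F. \<exists>d''\<in>ext K E A.
           rlz K E A d'' (cmp K g f) h' \<and>
           cmp K h' g = cmp K dm f' \<and> cmp K e h' = g' \<and>
           rlz K F D (ext_push K F f' d') dm e \<and>
           ext_pull K A dm d'' = d \<and>
           ext_push K E f d'' = ext_pull K B e d'))"

definition ET4op :: "('o,'m,'e) extri \<Rightarrow> bool" where
  "ET4op K \<longleftrightarrow>
     (\<forall>A B C D F d d' f f' g g'.
        rlz K B D d f' f \<longrightarrow> rlz K C F d' g' g \<longrightarrow>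
        f' \<in> Hom K D A \<longrightarrow> f \<in> Hom K A B \<longrightarrow> g' \<in> Hom K F B \<longrightarrow> g \<in> Hom K B C \<longrightarrow>
        (\<exists>E\<in>ob K. \<exists>dm\<in>Hom K D E. \<exists>e\<in>Hom K E F. \<exists>h'\<in>Hom K E A. \<exists>d''\<in>ext K C E.
           rlz K C E d'' h' (cmp K g f) \<and>
           cmp K h' dm = f' \<and> cmp K f h' = cmp K g' e \<and>
           rlz K F D (ext_pull K D g' d) dm e \<and>
           ext_push K C e d'' = d' \<and>
           ext_push K B dm d = ext_pull K E g d''))"

definition extriangulated :: "('o,'m,'e) extri \<Rightarrow> bool" where
  "extriangulated K \<longleftrightarrow> is_additive K \<and> ET1 K \<and> ET2 K \<and> ET3 K \<and> ET3op K \<and> ET4 K \<and> ET4op K"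

definition is_inflation :: "('o,'m,'e) extri \<Rightarrow> 'm \<Rightarrow> bool" where
  "is_inflation K x \<longleftrightarrow> (\<exists>C A d y. d \<in> ext K C A \<and> rlz K C A d x y)"

definition is_deflation :: "('o,'m,'e) extri \<Rightarrow> 'm \<Rightarrow> bool" where
  "is_deflation K y \<longleftrightarrow> (\<exists>C A d x. d \<in> ext K C A \<and> rlz K C A d x y)"

definition Sigma_mor :: "('o,'m,'e) extri \<Rightarrow> ('o \<Rightarrow> 'o) \<Rightarrow> ('o \<Rightarrow> 'e) \<Rightarrow> 'm \<Rightarrow> 'm" where
  "Sigma_mor K Sig dl f =
     (THE g. g \<in> Hom K (Sig (src K f)) (Sig (tgt K f)) \<and>
        ext_push K (Sig (src K f)) f (dl (src K f)) = ext_pull K (tgt K f) g (dl (tgt K f)))"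

text \<open>Isomorphism in Mor(Ab) of objects phi : G1 -> G2 and psi : H1 -> H2.\<close>
definition morab_iso :: "('a, 'x) monoid_scheme \<Rightarrow> ('b, 'y) monoid_scheme \<Rightarrow> ('a \<Rightarrow> 'b)
     \<Rightarrow> ('c, 'z) monoid_scheme \<Rightarrow> ('d, 'w) monoid_scheme \<Rightarrow> ('c \<Rightarrow> 'd) \<Rightarrow> bool" where
  "morab_iso G1 G2 phi H1 H2 psi \<longleftrightarrow>
     phi \<in> hom G1 G2 \<and> psi \<in> hom H1 H2 \<and>
     (\<exists>\<alpha> \<beta>. \<alpha> \<in> iso G1 H1 \<and> \<beta> \<in> iso G2 H2 \<and>
        (\<forall>u\<in>carrier G1. psi (\<alpha> u) = \<beta> (phi u)))"

end

theory Submission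
  imports Defs "HOL-Algebra.Coset"
begin

lemma ex_cat: "extriangulated K \<Longrightarrow> is_category K"
  unfolding extriangulated_def is_additive_def is_preadditive_def by (elim conjE)

lemma ex_pre: "extriangulated K \<Longrightarrow> is_preadditive K"
  unfolding extriangulated_def is_additive_def by (elim conjE)

lemma ex_ET1: "extriangulated K \<Longrightarrow> ET1 K"
  unfolding extriangulated_def by (elim conjE)

lemma ex_ET2: "extriangulated K \<Longrightarrow> ET2 K"
  unfolding extriangulated_def by (elim conjE)

lemma ex_ET3: "extriangulated K \<Longrightarrow> ET3 K"
  unfolding extriangulated_def by (elim conjE)

lemma et2_1: "extriangulated K \<Longrightarrow> rlz K C A d x y \<Longrightarrow> \<exists>B\<in>ob K. x \<in> Hom K A B \<and> y \<in> Hom K B C"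
  using ex_ET2[unfolded ET2_def, THEN conjunct1] by blast

lemma et2_2: "extriangulated K \<Longrightarrow> C \<in> ob K \<Longrightarrow> A \<in> ob K \<Longrightarrow> d \<in> ext K C A \<Longrightarrow> \<exists>x y. rlz K C A d x y"
  using ex_ET2[unfolded ET2_def, THEN conjunct2, THEN conjunct1] by blast

lemma et2_4: "extriangulated K \<Longrightarrow> rlz K C A d x y \<Longrightarrow> rlz K C' A' d' x' y' \<Longrightarrow>
        x \<in> Hom K A B \<Longrightarrow> y \<in> Hom K B C \<Longrightarrow> x' \<in> Hom K A' B' \<Longrightarrow> y' \<in> Hom K B' C' \<Longrightarrow>
        a \<in> Hom K A A' \<Longrightarrow> c \<in> Hom K C C' \<Longrightarrow>
        ext_push K C a d = ext_pull K A' c d' \<Longrightarrow>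
        (\<exists>b\<in>Hom K B B'. cmp K b x = cmp K x' a \<and> cmp K y' b = cmp K c y)"
proof -
  assume K: "extriangulated K"
  have H: "\<forall>C A B C' A' B' d d' x y x' y' a c.
        rlz K C A d x y \<longrightarrow> rlz K C' A' d' x' y' \<longrightarrow>
        x \<in> Hom K A B \<longrightarrow> y \<in> Hom K B C \<longrightarrow> x' \<in> Hom K A' B' \<longrightarrow> y' \<in> Hom K B' C' \<longrightarrow>
        a \<in> Hom K A A' \<longrightarrow> c \<in> Hom K C C' \<longrightarrow>
        ext_push K C a d = ext_pull K A' c d' \<longrightarrow>
        (\<exists>b\<in>Hom K B B'. cmp K b x = cmp K x' a \<and> cmp K y' b = cmp K c y)"
    using ex_ET2[OF K, unfolded ET2_def, THEN conjunct2, THEN conjunct2, THEN conjunct2, THEN conjunct1] .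
  show "rlz K C A d x y \<Longrightarrow> rlz K C' A' d' x' y' \<Longrightarrow>
        x \<in> Hom K A B \<Longrightarrow> y \<in> Hom K B C \<Longrightarrow> x' \<in> Hom K A' B' \<Longrightarrow> y' \<in> Hom K B' C' \<Longrightarrow>
        a \<in> Hom K A A' \<Longrightarrow> c \<in> Hom K C C' \<Longrightarrow>
        ext_push K C a d = ext_pull K A' c d' \<Longrightarrow>
        (\<exists>b\<in>Hom K B B'. cmp K b x = cmp K x' a \<and> cmp K y' b = cmp K c y)"
    using H[rule_format, of C A d x y C' A' d' x' y' B B' a c] by blast
qed

lemma et2_5: "extriangulated K \<Longrightarrow> C \<in> ob K \<Longrightarrow> A \<in> ob K \<Longrightarrow> is_biprod K A C S i1 i2 p1 p2 \<Longrightarrow>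
        rlz K C A (ezero K C A) i1 p2"
  using ex_ET2[unfolded ET2_def, THEN conjunct2, THEN conjunct2, THEN conjunct2, THEN conjunct2, THEN conjunct1] by blast

lemma et3: "extriangulated K \<Longrightarrow> rlz K C A d x y \<Longrightarrow> rlz K C' A' d' x' y' \<Longrightarrow>
        x \<in> Hom K A B \<Longrightarrow> y \<in> Hom K B C \<Longrightarrow> x' \<in> Hom K A' B' \<Longrightarrow> y' \<in> Hom K B' C' \<Longrightarrow>
        a \<in> Hom K A A' \<Longrightarrow> b \<in> Hom K B B' \<Longrightarrow> cmp K b x = cmp K x' a \<Longrightarrow>
        (\<exists>c\<in>Hom K C C'. cmp K c y = cmp K y' b \<and> ext_push K C a d = ext_pull K A' c d')"
proof -
  assume K: "extriangulated K"
  note H = ex_ET3[OF K, unfolded ET3_def]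
  show "rlz K C A d x y \<Longrightarrow> rlz K C' A' d' x' y' \<Longrightarrow>
        x \<in> Hom K A B \<Longrightarrow> y \<in> Hom K B C \<Longrightarrow> x' \<in> Hom K A' B' \<Longrightarrow> y' \<in> Hom K B' C' \<Longrightarrow>
        a \<in> Hom K A A' \<Longrightarrow> b \<in> Hom K B B' \<Longrightarrow> cmp K b x = cmp K x' a \<Longrightarrow>
        (\<exists>c\<in>Hom K C C'. cmp K c y = cmp K y' b \<and> ext_push K C a d = ext_pull K A' c d')"
    using H[rule_format, of C A d x y C' A' d' x' y' B B' a b] by blast
qed

lemma Hom_ob: "extriangulated K \<Longrightarrow> f \<in> Hom K X Y \<Longrightarrow> X \<in> ob K \<and> Y \<in> ob K"
  using ex_cat[unfolded is_category_def, THEN conjunct1] unfolding Hom_def by blast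

lemma cmp_Hom: "extriangulated K \<Longrightarrow> f \<in> Hom K X Y \<Longrightarrow> g \<in> Hom K Y Z \<Longrightarrow> cmp K g f \<in> Hom K X Z"
  using ex_cat[unfolded is_category_def, THEN conjunct2, THEN conjunct2, THEN conjunct1] by blast

lemma idm_Hom: "extriangulated K \<Longrightarrow> X \<in> ob K \<Longrightarrow> idm K X \<in> Hom K X X"
  using ex_cat[unfolded is_category_def, THEN conjunct2, THEN conjunct1] by blast

lemma cmp_assoc: "extriangulated K \<Longrightarrow> f \<in> Hom K W X \<Longrightarrow> g \<in> Hom K X Y \<Longrightarrow> h \<in> Hom K Y Z \<Longrightarrow>
        cmp K h (cmp K g f) = cmp K (cmp K h g) f"
  using ex_cat[unfolded is_category_def, THEN conjunct2, THEN conjunct2, THEN conjunct2, THEN conjunct1] by blast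

lemma cmp_idr: "extriangulated K \<Longrightarrow> f \<in> Hom K X Y \<Longrightarrow> cmp K f (idm K X) = f"
  using ex_cat[unfolded is_category_def, THEN conjunct2, THEN conjunct2, THEN conjunct2, THEN conjunct2] by blast

lemma cmp_idl: "extriangulated K \<Longrightarrow> f \<in> Hom K X Y \<Longrightarrow> cmp K (idm K Y) f = f"
  using ex_cat[unfolded is_category_def, THEN conjunct2, THEN conjunct2, THEN conjunct2, THEN conjunct2] by blast

lemma hom_cg: "extriangulated K \<Longrightarrow> X \<in> ob K \<Longrightarrow> Y \<in> ob K \<Longrightarrow> comm_group (homgrp K X Y)"
  using ex_pre[unfolded is_preadditive_def, THEN conjunct2, THEN conjunct1] by blast

lemma ext_cg: "extriangulated K \<Longrightarrow> X \<in> ob K \<Longrightarrow> Y \<in> ob K \<Longrightarrow> comm_group (extgrp K X Y)"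
  using ex_ET1[unfolded ET1_def, THEN conjunct1] by blast

lemma distl: "extriangulated K \<Longrightarrow> f \<in> Hom K X Y \<Longrightarrow> f' \<in> Hom K X Y \<Longrightarrow> g \<in> Hom K Y Z \<Longrightarrow>
        cmp K g (madd K f f') = madd K (cmp K g f) (cmp K g f')"
  using ex_pre[unfolded is_preadditive_def, THEN conjunct2, THEN conjunct2, THEN conjunct1] by blast

lemma distr: "extriangulated K \<Longrightarrow> f \<in> Hom K X Y \<Longrightarrow> g \<in> Hom K Y Z \<Longrightarrow> g' \<in> Hom K Y Z \<Longrightarrow>
        cmp K (madd K g g') f = madd K (cmp K g f) (cmp K g' f)"
  using ex_pre[unfolded is_preadditive_def, THEN conjunct2, THEN conjunct2, THEN conjunct2] by blast

lemma mzero_Hom: "extriangulated K \<Longrightarrow> X \<in> ob K \<Longrightarrow> Y \<in> ob K \<Longrightarrow> mzero K X Y \<in> Hom K X Y"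
proof -
  assume a: "extriangulated K" "X \<in> ob K" "Y \<in> ob K"
  then interpret comm_group "homgrp K X Y" by (rule hom_cg)
  show ?thesis using one_closed by (simp add: homgrp_def)
qed

lemma madd_zero: "extriangulated K \<Longrightarrow> X \<in> ob K \<Longrightarrow> Y \<in> ob K \<Longrightarrow> madd K (mzero K X Y) (mzero K X Y) = mzero K X Y"
proof -
  assume a: "extriangulated K" "X \<in> ob K" "Y \<in> ob K"
  then interpret comm_group "homgrp K X Y" by (rule hom_cg)
  show ?thesis using one_closed l_one by (simp add: homgrp_def)
qed

lemma idem_zero: "extriangulated K \<Longrightarrow> X \<in> ob K \<Longrightarrow> Y \<in> ob K \<Longrightarrow> u \<in> Hom K X Y \<Longrightarrow>
   madd K u u = u \<Longrightarrow> u = mzero K X Y"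
proof -
  assume a: "extriangulated K" "X \<in> ob K" "Y \<in> ob K" "u \<in> Hom K X Y" "madd K u u = u"
  interpret comm_group "homgrp K X Y" by (rule hom_cg[OF a(1-3)])
  have "u = \<one>\<^bsub>homgrp K X Y\<^esub>" using l_cancel_one[of u u] a(4,5) by (simp add: homgrp_def)
  then show ?thesis by (simp add: homgrp_def)
qed

lemma cmp_zero_r: "extriangulated K \<Longrightarrow> X \<in> ob K \<Longrightarrow> g \<in> Hom K Y Z \<Longrightarrow> cmp K g (mzero K X Y) = mzero K X Z"
proof -
  assume a: "extriangulated K" "X \<in> ob K" "g \<in> Hom K Y Z"
  have ob: "Y \<in> ob K" "Z \<in> ob K" using Hom_ob[OF a(1,3)] by auto
  have z: "mzero K X Y \<in> Hom K X Y" using mzero_Hom[OF a(1,2) ob(1)] .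
  have "cmp K g (mzero K X Y) = cmp K g (madd K (mzero K X Y) (mzero K X Y))"
    using madd_zero[OF a(1,2) ob(1)] by simp
  also have "\<dots> = madd K (cmp K g (mzero K X Y)) (cmp K g (mzero K X Y))"
    using distl[OF a(1) z z a(3)] .
  finally show ?thesis using idem_zero[OF a(1,2) ob(2)] cmp_Hom[OF a(1) z a(3)] by metis
qed

lemma cmp_zero_l: "extriangulated K \<Longrightarrow> Z \<in> ob K \<Longrightarrow> f \<in> Hom K X Y \<Longrightarrow> cmp K (mzero K Y Z) f = mzero K X Z"
proof -
  assume a: "extriangulated K" "Z \<in> ob K" "f \<in> Hom K X Y"
  have ob: "X \<in> ob K" "Y \<in> ob K" using Hom_ob[OF a(1,3)] by auto
  have z: "mzero K Y Z \<in> Hom K Y Z" using mzero_Hom[OF a(1) ob(2) a(2)] .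
  have "cmp K (mzero K Y Z) f = cmp K (madd K (mzero K Y Z) (mzero K Y Z)) f"
    using madd_zero[OF a(1) ob(2) a(2)] by simp
  also have "\<dots> = madd K (cmp K (mzero K Y Z) f) (cmp K (mzero K Y Z) f)"
    using distr[OF a(1) a(3) z z] .
  finally show ?thesis using idem_zero[OF a(1) ob(1) a(2)] cmp_Hom[OF a(1) a(3) z] by metis
qed

lemma eact_closed: "extriangulated K \<Longrightarrow> c \<in> Hom K C' C \<Longrightarrow> a \<in> Hom K A A' \<Longrightarrow> d \<in> ext K C A \<Longrightarrow>
        eact K c a d \<in> ext K C' A'"
  using ex_ET1[unfolded ET1_def, THEN conjunct2, THEN conjunct1] by blast

lemma eact_add: "extriangulated K \<Longrightarrow> c \<in> Hom K C' C \<Longrightarrow> a \<in> Hom K A A' \<Longrightarrow> d \<in> ext K C A \<Longrightarrow>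
        d' \<in> ext K C A \<Longrightarrow> eact K c a (eadd K d d') = eadd K (eact K c a d) (eact K c a d')"
  using ex_ET1[unfolded ET1_def, THEN conjunct2, THEN conjunct2, THEN conjunct1] by blast

lemma eact_id: "extriangulated K \<Longrightarrow> C \<in> ob K \<Longrightarrow> A \<in> ob K \<Longrightarrow> d \<in> ext K C A \<Longrightarrow> eact K (idm K C) (idm K A) d = d"
  using ex_ET1[unfolded ET1_def, THEN conjunct2, THEN conjunct2, THEN conjunct2, THEN conjunct1] by blast

lemma eact_comp: "extriangulated K \<Longrightarrow> c \<in> Hom K C' C \<Longrightarrow> c' \<in> Hom K C'' C' \<Longrightarrow>
        a \<in> Hom K A A' \<Longrightarrow> a' \<in> Hom K A' A'' \<Longrightarrow> d \<in> ext K C A \<Longrightarrow>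
        eact K (cmp K c c') (cmp K a' a) d = eact K c' a' (eact K c a d)"
  using ex_ET1[unfolded ET1_def, THEN conjunct2, THEN conjunct2, THEN conjunct2, THEN conjunct2, THEN conjunct1] by blast

lemma eact_maddc: "extriangulated K \<Longrightarrow> c1 \<in> Hom K C' C \<Longrightarrow> c2 \<in> Hom K C' C \<Longrightarrow> a \<in> Hom K A A' \<Longrightarrow>
        d \<in> ext K C A \<Longrightarrow> eact K (madd K c1 c2) a d = eadd K (eact K c1 a d) (eact K c2 a d)"
  using ex_ET1[unfolded ET1_def, THEN conjunct2, THEN conjunct2, THEN conjunct2, THEN conjunct2, THEN conjunct2, THEN conjunct1] by blast

lemma ezero_id: "extriangulated K \<Longrightarrow> C \<in> ob K \<Longrightarrow> A \<in> ob K \<Longrightarrow> eact K (idm K C) (idm K A) (ezero K C A) = ezero K C A"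
proof -
  assume a: "extriangulated K" "C \<in> ob K" "A \<in> ob K"
  then interpret comm_group "extgrp K C A" by (rule ext_cg)
  show ?thesis using one_closed eact_id a by (simp add: extgrp_def)
qed

lemma alpha_iso:
  assumes K: "extriangulated K" and A: "A \<in> ob K" and X: "X \<in> ob K"
    and SX: "Sig X \<in> ob K" and dX: "dl X \<in> ext K (Sig X) X"
    and Z0: "zero_obj K Z0"
    and r: "rlz K (Sig X) X (dl X) (mzero K X Z0) (mzero K Z0 (Sig X))"
  shows "(\<lambda>u. eact K u (idm K X) (dl X)) \<in> iso (homgrp K A (Sig X)) (extgrp K A X)"
proof -
  let ?a = "\<lambda>u. eact K u (idm K X) (dl X)"
  have Z0o: "Z0 \<in> ob K" using Z0 unfolding zero_obj_def by blast
  have idX: "idm K X \<in> Hom K X X" using idm_Hom[OF K X] .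
  interpret G: comm_group "homgrp K A (Sig X)" by (rule hom_cg[OF K A SX])
  interpret H: comm_group "extgrp K A X" by (rule ext_cg[OF K A X])
  have hom: "?a \<in> hom (homgrp K A (Sig X)) (extgrp K A X)"
  proof (rule homI)
    fix u assume "u \<in> carrier (homgrp K A (Sig X))"
    then have "u \<in> Hom K A (Sig X)" by (simp add: homgrp_def)
    then show "?a u \<in> carrier (extgrp K A X)" using eact_closed[OF K _ idX dX] by (simp add: extgrp_def)
  next
    fix u v assume "u \<in> carrier (homgrp K A (Sig X))" "v \<in> carrier (homgrp K A (Sig X))"
    then have uv: "u \<in> Hom K A (Sig X)" "v \<in> Hom K A (Sig X)" by (simp_all add: homgrp_def)
    show "?a (u \<otimes>\<^bsub>homgrp K A (Sig X)\<^esub> v) = ?a u \<otimes>\<^bsub>extgrp K A X\<^esub> ?a v"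
      using eact_maddc[OF K uv idX dX] by (simp add: homgrp_def extgrp_def)
  qed
  interpret gh: group_hom "homgrp K A (Sig X)" "extgrp K A X" ?a
    by (simp add: group_hom_def group_hom_axioms_def hom G.group_axioms H.group_axioms)
  have ker: "kernel (homgrp K A (Sig X)) (extgrp K A X) ?a = {\<one>\<^bsub>homgrp K A (Sig X)\<^esub>}"
  proof -
    have H: "c = mzero K A (Sig X)" if c: "c \<in> Hom K A (Sig X)" and e: "?a c = ezero K A X" for c
    proof -
      obtain S i1 i2 p1 p2 where bp: "is_biprod K X A S i1 i2 p1 p2"
        using K X A unfolding extriangulated_def is_additive_def by blast
      have bpf: "S \<in> ob K" "i1 \<in> Hom K X S" "i2 \<in> Hom K A S" "p2 \<in> Hom K S A" "cmp K p2 i2 = idm K A"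
        using bp unfolding is_biprod_def by auto
      have r0: "rlz K A X (ezero K A X) i1 p2"
        using et2_5[OF K A X bp] .
      have m1: "mzero K X Z0 \<in> Hom K X Z0" using mzero_Hom[OF K X Z0o] .
      have m2: "mzero K Z0 (Sig X) \<in> Hom K Z0 (Sig X)" using mzero_Hom[OF K Z0o SX] .
      have eq: "ext_push K A (idm K X) (ezero K A X) = ext_pull K X c (dl X)"
        unfolding ext_push_def ext_pull_def using ezero_id[OF K A X] e by simp
      obtain b where b: "b \<in> Hom K S Z0" "cmp K (mzero K Z0 (Sig X)) b = cmp K c p2"
        using et2_4[OF K r0 r bpf(2,4) m1 m2 idX c eq] by blast
      have "cmp K c p2 = mzero K S (Sig X)" using b cmp_zero_l[OF K SX b(1)] by simp
      then have "cmp K (cmp K c p2) i2 = mzero K A (Sig X)" using cmp_zero_l[OF K SX bpf(3)] by simp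
      moreover have "cmp K (cmp K c p2) i2 = c"
        using cmp_assoc[OF K bpf(3) bpf(4) c] bpf(5) cmp_idr[OF K c] by simp
      ultimately show ?thesis by simp
    qed
    have o: "?a (mzero K A (Sig X)) = ezero K A X"
      using gh.hom_one by (simp add: homgrp_def extgrp_def)
    have mz: "mzero K A (Sig X) \<in> Hom K A (Sig X)" using mzero_Hom[OF K A SX] .
    show ?thesis unfolding kernel_def
    proof (intro equalityI subsetI)
      fix c assume "c \<in> {x \<in> carrier (homgrp K A (Sig X)). ?a x = \<one>\<^bsub>extgrp K A X\<^esub>}"
      then have "c \<in> Hom K A (Sig X)" "?a c = ezero K A X" by (simp_all add: homgrp_def extgrp_def)
      then have "c = mzero K A (Sig X)" by (rule H)
      then show "c \<in> {\<one>\<^bsub>homgrp K A (Sig X)\<^esub>}" by (simp add: homgrp_def)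
    next
      fix c assume "c \<in> {\<one>\<^bsub>homgrp K A (Sig X)\<^esub>}"
      then have "c = mzero K A (Sig X)" by (simp add: homgrp_def)
      then show "c \<in> {x \<in> carrier (homgrp K A (Sig X)). ?a x = \<one>\<^bsub>extgrp K A X\<^esub>}"
        using o mz by (simp add: homgrp_def extgrp_def)
    qed
  qed
  have inj: "inj_on ?a (carrier (homgrp K A (Sig X)))"
    using gh.trivial_ker_imp_inj[OF ker] .
  have surj: "?a ` carrier (homgrp K A (Sig X)) = carrier (extgrp K A X)"
  proof
    show "?a ` carrier (homgrp K A (Sig X)) \<subseteq> carrier (extgrp K A X)"
      using hom unfolding hom_def by auto
  next
    show "carrier (extgrp K A X) \<subseteq> ?a ` carrier (homgrp K A (Sig X))"
    proof
      fix d assume "d \<in> carrier (extgrp K A X)"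
      then have d: "d \<in> ext K A X" by (simp add: extgrp_def)
      obtain x y where rd: "rlz K A X d x y" using et2_2[OF K A X d] by blast
      obtain B where B: "B \<in> ob K" "x \<in> Hom K X B" "y \<in> Hom K B A"
        using et2_1[OF K rd] by blast
      have m1: "mzero K X Z0 \<in> Hom K X Z0" using mzero_Hom[OF K X Z0o] .
      have m2: "mzero K Z0 (Sig X) \<in> Hom K Z0 (Sig X)" using mzero_Hom[OF K Z0o SX] .
      have mb: "mzero K B Z0 \<in> Hom K B Z0" using mzero_Hom[OF K B(1) Z0o] .
      have sq: "cmp K (mzero K B Z0) x = cmp K (mzero K X Z0) (idm K X)"
        using cmp_zero_l[OF K Z0o B(2)] cmp_idr[OF K m1] by simp
      obtain c where c: "c \<in> Hom K A (Sig X)" "ext_push K A (idm K X) d = ext_pull K X c (dl X)"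
        using et3[OF K rd r B(2,3) m1 m2 idX mb sq] by blast
      have "d = ?a c" using c(2) eact_id[OF K A X d] unfolding ext_push_def ext_pull_def by simp
      then show "d \<in> ?a ` carrier (homgrp K A (Sig X))" using c(1) by (auto simp: homgrp_def)
    qed
  qed
  show ?thesis unfolding iso_def bij_betw_def using hom inj surj by blast
qed

lemma postcomp_hom: "extriangulated K \<Longrightarrow> g \<in> Hom K Y Z \<Longrightarrow>
  (\<lambda>e. cmp K g e) \<in> hom (homgrp K A Y) (homgrp K A Z)"
proof -
  assume K: "extriangulated K" and g: "g \<in> Hom K Y Z"
  show ?thesis
  proof (rule homI)
    fix u assume "u \<in> carrier (homgrp K A Y)"
    then show "cmp K g u \<in> carrier (homgrp K A Z)" using cmp_Hom[OF K _ g] by (simp add: homgrp_def)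
  next
    fix u v assume "u \<in> carrier (homgrp K A Y)" "v \<in> carrier (homgrp K A Y)"
    then have uv: "u \<in> Hom K A Y" "v \<in> Hom K A Y" by (simp_all add: homgrp_def)
    show "cmp K g (u \<otimes>\<^bsub>homgrp K A Y\<^esub> v) = cmp K g u \<otimes>\<^bsub>homgrp K A Z\<^esub> cmp K g v"
      using distl[OF K uv g] by (simp add: homgrp_def)
  qed
qed

lemma precomp_hom: "extriangulated K \<Longrightarrow> f \<in> Hom K X Y \<Longrightarrow>
  (\<lambda>e. cmp K e f) \<in> hom (homgrp K Y Z) (homgrp K X Z)"
proof -
  assume K: "extriangulated K" and f: "f \<in> Hom K X Y"
  show ?thesis
  proof (rule homI)
    fix u assume "u \<in> carrier (homgrp K Y Z)"
    then show "cmp K u f \<in> carrier (homgrp K X Z)" using cmp_Hom[OF K f] by (simp add: homgrp_def)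
  next
    fix u v assume "u \<in> carrier (homgrp K Y Z)" "v \<in> carrier (homgrp K Y Z)"
    then have uv: "u \<in> Hom K Y Z" "v \<in> Hom K Y Z" by (simp_all add: homgrp_def)
    show "cmp K (u \<otimes>\<^bsub>homgrp K Y Z\<^esub> v) f = cmp K u f \<otimes>\<^bsub>homgrp K X Z\<^esub> cmp K v f"
      using distr[OF K f uv] by (simp add: homgrp_def)
  qed
qed

lemma push_hom: "extriangulated K \<Longrightarrow> f \<in> Hom K X Y \<Longrightarrow> A \<in> ob K \<Longrightarrow>
  (\<lambda>d. ext_push K A f d) \<in> hom (extgrp K A X) (extgrp K A Y)"
proof -
  assume K: "extriangulated K" and f: "f \<in> Hom K X Y" and A: "A \<in> ob K"
  have i: "idm K A \<in> Hom K A A" using idm_Hom[OF K A] .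
  show ?thesis
  proof (rule homI)
    fix u assume "u \<in> carrier (extgrp K A X)"
    then show "ext_push K A f u \<in> carrier (extgrp K A Y)" using eact_closed[OF K i f]
      by (simp add: extgrp_def ext_push_def)
  next
    fix u v assume "u \<in> carrier (extgrp K A X)" "v \<in> carrier (extgrp K A X)"
    then have uv: "u \<in> ext K A X" "v \<in> ext K A X" by (simp_all add: extgrp_def)
    show "ext_push K A f (u \<otimes>\<^bsub>extgrp K A X\<^esub> v) = ext_push K A f u \<otimes>\<^bsub>extgrp K A Y\<^esub> ext_push K A f v"
      using eact_add[OF K i f uv] by (simp add: extgrp_def ext_push_def)
  qed
qed

lemma pull_hom: "extriangulated K \<Longrightarrow> f \<in> Hom K X Y \<Longrightarrow> A \<in> ob K \<Longrightarrow>
  (\<lambda>d. ext_pull K A f d) \<in> hom (extgrp K Y A) (extgrp K X A)"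
proof -
  assume K: "extriangulated K" and f: "f \<in> Hom K X Y" and A: "A \<in> ob K"
  have i: "idm K A \<in> Hom K A A" using idm_Hom[OF K A] .
  show ?thesis
  proof (rule homI)
    fix u assume "u \<in> carrier (extgrp K Y A)"
    then show "ext_pull K A f u \<in> carrier (extgrp K X A)" using eact_closed[OF K f i]
      by (simp add: extgrp_def ext_pull_def)
  next
    fix u v assume "u \<in> carrier (extgrp K Y A)" "v \<in> carrier (extgrp K Y A)"
    then have uv: "u \<in> ext K Y A" "v \<in> ext K Y A" by (simp_all add: extgrp_def)
    show "ext_pull K A f (u \<otimes>\<^bsub>extgrp K Y A\<^esub> v) = ext_pull K A f u \<otimes>\<^bsub>extgrp K X A\<^esub> ext_pull K A f v"
      using eact_add[OF K f i uv] by (simp add: extgrp_def ext_pull_def)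
  qed
qed

theorem lemma3p10:
  fixes K :: "('o, 'm, 'e) extri"
    and Sig :: "'o \<Rightarrow> 'o" and dl :: "'o \<Rightarrow> 'e"
    and A X Y :: 'o and f :: 'm
  assumes "extriangulated K"
    and "\<forall>C\<in>ob K. \<forall>Z. zero_obj K Z \<longrightarrow>
           is_inflation K (mzero K C Z) \<and> is_deflation K (mzero K Z C)"
    and "\<forall>Z\<in>ob K. Sig Z \<in> ob K \<and> dl Z \<in> ext K (Sig Z) Z \<and>
           (\<exists>Z0. zero_obj K Z0 \<and> rlz K (Sig Z) Z (dl Z) (mzero K Z Z0) (mzero K Z0 (Sig Z)))"
    and "A \<in> ob K"
    and "f \<in> Hom K X Y"
  shows "morab_iso (homgrp K A (Sig X)) (homgrp K A (Sig Y)) (\<lambda>e. cmp K (Sigma_mor K Sig dl f) e)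
                   (extgrp K A X) (extgrp K A Y) (\<lambda>d. ext_push K A f d)
       \<and> morab_iso (homgrp K Y (Sig A)) (homgrp K X (Sig A)) (\<lambda>e. cmp K e f)
                   (extgrp K Y A) (extgrp K X A) (\<lambda>d. ext_pull K A f d)"
proof -
  note K = assms(1)
  note A = assms(4)
  note f = assms(5)
  have X: "X \<in> ob K" and Y: "Y \<in> ob K" using Hom_ob[OF K f] by auto
  have sf: "src K f = X" "tgt K f = Y" using f by (simp_all add: Hom_def)
  have S: "\<And>Z. Z \<in> ob K \<Longrightarrow> Sig Z \<in> ob K \<and> dl Z \<in> ext K (Sig Z) Z \<and>
           (\<exists>Z0. zero_obj K Z0 \<and> rlz K (Sig Z) Z (dl Z) (mzero K Z Z0) (mzero K Z0 (Sig Z)))"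
    using assms(3) by blast
  have iso: "\<And>B Z. B \<in> ob K \<Longrightarrow> Z \<in> ob K \<Longrightarrow>
     (\<lambda>u. eact K u (idm K Z) (dl Z)) \<in> iso (homgrp K B (Sig Z)) (extgrp K B Z)"
  proof -
    fix B Z assume B: "B \<in> ob K" and Z: "Z \<in> ob K"
    obtain Z0 where "zero_obj K Z0" "rlz K (Sig Z) Z (dl Z) (mzero K Z Z0) (mzero K Z0 (Sig Z))"
      using S[OF Z] by blast
    then show "(\<lambda>u. eact K u (idm K Z) (dl Z)) \<in> iso (homgrp K B (Sig Z)) (extgrp K B Z)"
      using alpha_iso[OF K B Z] S[OF Z] by blast
  qed
  have SX: "Sig X \<in> ob K" "dl X \<in> ext K (Sig X) X" using S[OF X] by auto
  have SY: "Sig Y \<in> ob K" "dl Y \<in> ext K (Sig Y) Y" using S[OF Y] by auto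
  have SA: "Sig A \<in> ob K" "dl A \<in> ext K (Sig A) A" using S[OF A] by auto
  have iX: "idm K X \<in> Hom K X X" using idm_Hom[OF K X] .
  have iY: "idm K Y \<in> Hom K Y Y" using idm_Hom[OF K Y] .
  have iA: "idm K A \<in> Hom K A A" using idm_Hom[OF K A] .
  have iSX: "idm K (Sig X) \<in> Hom K (Sig X) (Sig X)" using idm_Hom[OF K SX(1)] .
  have e0: "ext_push K (Sig X) f (dl X) \<in> ext K (Sig X) Y"
    unfolding ext_push_def using eact_closed[OF K iSX f SX(2)] .
  have isoY: "(\<lambda>u. eact K u (idm K Y) (dl Y)) \<in> iso (homgrp K (Sig X) (Sig Y)) (extgrp K (Sig X) Y)"
    using iso[OF SX(1) Y] .
  then have bij: "bij_betw (\<lambda>u. eact K u (idm K Y) (dl Y)) (Hom K (Sig X) (Sig Y)) (ext K (Sig X) Y)"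
    unfolding iso_def by (simp add: homgrp_def extgrp_def)
  have ex1: "\<exists>!g. g \<in> Hom K (Sig X) (Sig Y) \<and> ext_push K (Sig X) f (dl X) = ext_pull K Y g (dl Y)"
  proof -
    obtain g where g: "g \<in> Hom K (Sig X) (Sig Y)" "eact K g (idm K Y) (dl Y) = ext_push K (Sig X) f (dl X)"
      using bij e0 unfolding bij_betw_def by (metis (no_types, lifting) imageE)
    show ?thesis
    proof (rule ex1I[of _ g])
      show "g \<in> Hom K (Sig X) (Sig Y) \<and> ext_push K (Sig X) f (dl X) = ext_pull K Y g (dl Y)"
        using g by (simp add: ext_pull_def)
    next
      fix h assume h: "h \<in> Hom K (Sig X) (Sig Y) \<and> ext_push K (Sig X) f (dl X) = ext_pull K Y h (dl Y)"
      then show "h = g" using g bij unfolding bij_betw_def inj_on_def ext_pull_def by metis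
    qed
  qed
  define g where "g = Sigma_mor K Sig dl f"
  have gp: "g \<in> Hom K (Sig X) (Sig Y) \<and> ext_push K (Sig X) f (dl X) = ext_pull K Y g (dl Y)"
    unfolding g_def Sigma_mor_def sf using theI'[OF ex1] .
  have g: "g \<in> Hom K (Sig X) (Sig Y)" using gp by blast
  have gq: "eact K g (idm K Y) (dl Y) = eact K (idm K (Sig X)) f (dl X)"
    using gp by (simp add: ext_push_def ext_pull_def)
  have P1: "morab_iso (homgrp K A (Sig X)) (homgrp K A (Sig Y)) (\<lambda>e. cmp K g e)
                   (extgrp K A X) (extgrp K A Y) (\<lambda>d. ext_push K A f d)"
    unfolding morab_iso_def
  proof (intro conjI exI)
    show "(\<lambda>e. cmp K g e) \<in> hom (homgrp K A (Sig X)) (homgrp K A (Sig Y))"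
      using postcomp_hom[OF K g] .
    show "(\<lambda>d. ext_push K A f d) \<in> hom (extgrp K A X) (extgrp K A Y)" using push_hom[OF K f A] .
    show "(\<lambda>u. eact K u (idm K X) (dl X)) \<in> iso (homgrp K A (Sig X)) (extgrp K A X)" using iso[OF A X] .
    show "(\<lambda>u. eact K u (idm K Y) (dl Y)) \<in> iso (homgrp K A (Sig Y)) (extgrp K A Y)" using iso[OF A Y] .
    show "\<forall>u\<in>carrier (homgrp K A (Sig X)).
       ext_push K A f (eact K u (idm K X) (dl X)) = eact K (cmp K g u) (idm K Y) (dl Y)"
    proof
      fix u assume "u \<in> carrier (homgrp K A (Sig X))"
      then have u: "u \<in> Hom K A (Sig X)" by (simp add: homgrp_def)
      have "ext_push K A f (eact K u (idm K X) (dl X)) = eact K (cmp K u (idm K A)) (cmp K f (idm K X)) (dl X)"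
        unfolding ext_push_def using eact_comp[OF K u iA iX f SX(2)] by simp
      also have "\<dots> = eact K u f (dl X)" using cmp_idr[OF K u] cmp_idr[OF K f] by simp
      finally have l: "ext_push K A f (eact K u (idm K X) (dl X)) = eact K u f (dl X)" .
      have "eact K (cmp K g u) (idm K Y) (dl Y) = eact K (cmp K g u) (cmp K (idm K Y) (idm K Y)) (dl Y)"
        using cmp_idr[OF K iY] by simp
      also have "\<dots> = eact K u (idm K Y) (eact K g (idm K Y) (dl Y))"
        using eact_comp[OF K g u iY iY SY(2)] .
      also have "\<dots> = eact K u (idm K Y) (eact K (idm K (Sig X)) f (dl X))" using gq by simp
      also have "\<dots> = eact K (cmp K (idm K (Sig X)) u) (cmp K (idm K Y) f) (dl X)"
        using eact_comp[OF K iSX u f iY SX(2)] by simp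
      also have "\<dots> = eact K u f (dl X)" using cmp_idl[OF K u] cmp_idl[OF K f] by simp
      finally show "ext_push K A f (eact K u (idm K X) (dl X)) = eact K (cmp K g u) (idm K Y) (dl Y)"
        using l by simp
    qed
  qed
  have P2: "morab_iso (homgrp K Y (Sig A)) (homgrp K X (Sig A)) (\<lambda>e. cmp K e f)
                   (extgrp K Y A) (extgrp K X A) (\<lambda>d. ext_pull K A f d)"
    unfolding morab_iso_def
  proof (intro conjI exI)
    show "(\<lambda>e. cmp K e f) \<in> hom (homgrp K Y (Sig A)) (homgrp K X (Sig A))"
      using precomp_hom[OF K f] .
    show "(\<lambda>d. ext_pull K A f d) \<in> hom (extgrp K Y A) (extgrp K X A)" using pull_hom[OF K f A] .
    show "(\<lambda>u. eact K u (idm K A) (dl A)) \<in> iso (homgrp K Y (Sig A)) (extgrp K Y A)" using iso[OF Y A] .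
    show "(\<lambda>u. eact K u (idm K A) (dl A)) \<in> iso (homgrp K X (Sig A)) (extgrp K X A)" using iso[OF X A] .
    show "\<forall>u\<in>carrier (homgrp K Y (Sig A)).
       ext_pull K A f (eact K u (idm K A) (dl A)) = eact K (cmp K u f) (idm K A) (dl A)"
    proof
      fix u assume "u \<in> carrier (homgrp K Y (Sig A))"
      then have u: "u \<in> Hom K Y (Sig A)" by (simp add: homgrp_def)
      have "ext_pull K A f (eact K u (idm K A) (dl A)) = eact K (cmp K u f) (cmp K (idm K A) (idm K A)) (dl A)"
        unfolding ext_pull_def using eact_comp[OF K u f iA iA SA(2)] by simp
      then show "ext_pull K A f (eact K u (idm K A) (dl A)) = eact K (cmp K u f) (idm K A) (dl A)"
        using cmp_idr[OF K iA] by simp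
    qed
  qed
  show ?thesis unfolding g_def[symmetric] by (rule conjI[OF P1 P2])
qed

end
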